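(* Suppose $\mathit{Act}$ is infinite. Then $\mathcal{E}_v'$ is complete for $\simeq$ over open monitors: for all monitors $m,n$ (possibly containing variables), if $m\simeq n$ then $\mathcal{E}_v'\vdash m=n$.
   Context: Monitors: terms $m,n ::= v \mid a.m \mid m+n \mid x$ over an action set $\mathit{Act}$ ($a\in\mathit{Act}$) and a countably infinite variable set $\mathit{Var}$, verdicts $v::=\mathit{end}\mid\mathit{yes}\mid\mathit{no}$; closed monitors contain no variables; a closed substitution maps variables to closed monitors. Transitions $\xrightarrow{\alpha}$, $\alpha\in\mathit{Act}\cup\{\tau\}$ ($\tau\notin\mathit{Act}$): least relation with $a.m\xrightarrow{a}m$; $m\xrightarrow{\alpha}m'$ implies $m+n\xrightarrow{\alpha}m'$ and $n+m\xrightarrow{\alpha}m'$; $v\xrightarrow{\alpha}v$ for each verdict $v$. Weak transitions: $m\xRightarrow{\varepsilon}m'$ iff $m(\xrightarrow{\tau})^*m'$; $m\xRightarrow{a}m'$ iff $m\xRightarrow{\varepsilon}\xrightarrow{a}\xRightarrow{\varepsilon}m'$; $m\xRightarrow{as'}m'$ ($s'\neq\varepsilon$) iff $m\xRightarrow{a}m_1\xRightarrow{s'}m'$. For closed $m$: $L_a(m)=\{s\mid m\xRightarrow{s}\mathit{yes}\}$, $L_r(m)=\{s\mid m\xRightarrow{s}\mathit{no}\}$; closed $m\simeq n$ iff $L_a(m)=L_a(n)$ and $L_r(m)=L_r(n)$; for open monitors $m\simeq n$ iff $\sigma(m)\simeq\sigma(n)$ for all closed substitutions $\sigma$. $\mathcal{E}\vdash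 m=n$ denotes derivability by reflexivity, symmetry, transitivity, substitution (from $t=t'$ infer $\sigma(t)=\sigma(t')$ for any substitution) and congruence for $a.\_$ and $+$. $\mathcal{E}_v$ consists of (A1) $x+y=y+x$; (A2) $x+(y+z)=(x+y)+z$; (A3) $x+x=x$; (A4) $x+\mathit{end}=x$; and, for each $a\in\mathit{Act}$, ($E_a$) $a.\mathit{end}=\mathit{end}$; ($Y_a$) $\mathit{yes}=\mathit{yes}+a.\mathit{yes}$; ($N_a$) $\mathit{no}=\mathit{no}+a.\mathit{no}$; ($D_a$) $a.(x+y)=a.x+a.y$. $\mathcal{E}_v'=\mathcal{E}_v\cup\{O1\}$ where (O1) $\mathit{yes}+\mathit{no}=\mathit{yes}+\mathit{no}+x$. *)

theory Defs
  imports Main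
begin

datatype verdict = End | Yes | No

datatype 'a mon = V verdict | Pre 'a "'a mon" | Plus "'a mon" "'a mon" | Var nat

fun vars :: "'a mon \<Rightarrow> nat set" where
  "vars (V v) = {}"
| "vars (Pre a m) = vars m"
| "vars (Plus m n) = vars m \<union> vars n"
| "vars (Var x) = {x}"

definition closed :: "'a mon \<Rightarrow> bool" where
  "closed m \<longleftrightarrow> vars m = {}"

fun subst :: "(nat \<Rightarrow> 'a mon) \<Rightarrow> 'a mon \<Rightarrow> 'a mon" where
  "subst \<sigma> (V v) = V v"
| "subst \<sigma> (Pre a m) = Pre a (subst \<sigma> m)"
| "subst \<sigma> (Plus m n) = Plus (subst \<sigma> m) (subst \<sigma> n)"
| "subst \<sigma> (Var x) = \<sigma> x"

definition closed_subst :: "(nat \<Rightarrow> 'a mon) \<Rightarrow> bool" where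
  "closed_subst \<sigma> \<longleftrightarrow> (\<forall>x. closed (\<sigma> x))"

text \<open>Labels: Some a for an action a, None for tau.\<close>
inductive step :: "'a mon \<Rightarrow> 'a option \<Rightarrow> 'a mon \<Rightarrow> bool" where
  act: "step (Pre a m) (Some a) m"
| suml: "step m \<alpha> m' \<Longrightarrow> step (Plus m n) \<alpha> m'"
| sumr: "step m \<alpha> m' \<Longrightarrow> step (Plus n m) \<alpha> m'"
| verd: "step (V v) \<alpha> (V v)"

definition tau_star :: "'a mon \<Rightarrow> 'a mon \<Rightarrow> bool" where
  "tau_star = (\<lambda>m m'. step m None m')\<^sup>*\<^sup>*"

fun weak :: "'a mon \<Rightarrow> 'a list \<Rightarrow> 'a mon \<Rightarrow> bool" where
  "weak m [] m' \<longleftrightarrow> tau_star m m'"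
| "weak m (a # s) m' \<longleftrightarrow>
     (\<exists>m1 m2 m3. tau_star m m1 \<and> step m1 (Some a) m2 \<and> tau_star m2 m3 \<and> weak m3 s m')"

definition La :: "'a mon \<Rightarrow> 'a list set" where
  "La m = {s. weak m s (V Yes)}"

definition Lr :: "'a mon \<Rightarrow> 'a list set" where
  "Lr m = {s. weak m s (V No)}"

definition closed_equiv :: "'a mon \<Rightarrow> 'a mon \<Rightarrow> bool" where
  "closed_equiv m n \<longleftrightarrow> La m = La n \<and> Lr m = Lr n"

definition mon_equiv :: "'a mon \<Rightarrow> 'a mon \<Rightarrow> bool" where
  "mon_equiv m n \<longleftrightarrow> (\<forall>\<sigma>. closed_subst \<sigma> \<longrightarrow> closed_equiv (subst \<sigma> m) (subst \<sigma> n))"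

text \<open>The axioms of E_v' (E_v plus O1), with variables x=0, y=1, z=2.\<close>
inductive axiom :: "'a mon \<Rightarrow> 'a mon \<Rightarrow> bool" where
  A1: "axiom (Plus (Var 0) (Var 1)) (Plus (Var 1) (Var 0))"
| A2: "axiom (Plus (Var 0) (Plus (Var 1) (Var 2))) (Plus (Plus (Var 0) (Var 1)) (Var 2))"
| A3: "axiom (Plus (Var 0) (Var 0)) (Var 0)"
| A4: "axiom (Plus (Var 0) (V End)) (Var 0)"
| E: "axiom (Pre a (V End)) (V End)"
| Y: "axiom (V Yes) (Plus (V Yes) (Pre a (V Yes)))"
| N: "axiom (V No) (Plus (V No) (Pre a (V No)))"
| D: "axiom (Pre a (Plus (Var 0) (Var 1))) (Plus (Pre a (Var 0)) (Pre a (Var 1)))"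
| O1: "axiom (Plus (V Yes) (V No)) (Plus (Plus (V Yes) (V No)) (Var 0))"

inductive derivable :: "('a mon \<Rightarrow> 'a mon \<Rightarrow> bool) \<Rightarrow> 'a mon \<Rightarrow> 'a mon \<Rightarrow> bool" for E where
  ax: "E t t' \<Longrightarrow> derivable E t t'"
| refl: "derivable E t t"
| sym: "derivable E t t' \<Longrightarrow> derivable E t' t"
| trans: "derivable E t t' \<Longrightarrow> derivable E t' t'' \<Longrightarrow> derivable E t t''"
| subst: "derivable E t t' \<Longrightarrow> derivable E (subst \<sigma> t) (subst \<sigma> t')"
| pre: "derivable E t t' \<Longrightarrow> derivable E (Pre a t) (Pre a t')"
| plus: "derivable E t1 t1' \<Longrightarrow> derivable E t2 t2' \<Longrightarrow> derivable E (Plus t1 t2) (Plus t1' t2')"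

end

theory Submission
  imports Defs "HOL-Library.Sublist"
begin

abbreviation dv :: "'a mon \<Rightarrow> 'a mon \<Rightarrow> bool" where "dv \<equiv> derivable axiom"

lemma inst: assumes "axiom l r" shows "dv (subst \<sigma> l) (subst \<sigma> r)"
  using derivable.subst[OF derivable.ax[of axiom, OF assms]] .

lemma dv_comm: "dv (Plus x y) (Plus y x)"
  using inst[OF axiom.A1, of "\<lambda>i. [x,y] ! i"] by simp

lemma dv_assoc: "dv (Plus x (Plus y z)) (Plus (Plus x y) z)"
  using inst[OF axiom.A2, of "\<lambda>i. [x,y,z] ! i"] by simp

lemma dv_idem: "dv (Plus x x) x"
  using inst[OF axiom.A3, of "\<lambda>i. x"] by simp

lemma dv_end: "dv (Plus x (V End)) x"
  using inst[OF axiom.A4, of "\<lambda>i. x"] by simp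

lemma dv_D: "dv (Pre a (Plus x y)) (Plus (Pre a x) (Pre a y))"
  using inst[OF axiom.D[of a], of "\<lambda>i. [x,y] ! i"] by simp

lemma dv_O1: "dv (Plus (V Yes) (V No)) (Plus (Plus (V Yes) (V No)) x)"
  using inst[OF axiom.O1, of "\<lambda>i. x"] by simp

lemmas dvt = derivable.trans
lemmas dvs = derivable.sym
lemmas dvr = derivable.refl

definition le :: "'a mon \<Rightarrow> 'a mon \<Rightarrow> bool" where
  "le m n \<longleftrightarrow> dv n (Plus n m)"

lemma le_antisym: "le m n \<Longrightarrow> le n m \<Longrightarrow> dv m n"
  unfolding le_def by (rule dvt[OF _ dvt[OF dv_comm dvs]])

lemma le_trans: assumes "le m n" "le n k" shows "le m k"
proof -
  have 1: "dv k (Plus k n)" using assms(2) le_def by auto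
  have 2: "dv (Plus k n) (Plus k (Plus n m))"
    using derivable.plus[OF dvr assms(1)[unfolded le_def]] .
  have 3: "dv (Plus (Plus k n) m) (Plus k m)"
    using derivable.plus[OF dvs[OF 1] dvr] .
  show ?thesis unfolding le_def by (rule dvt[OF 1 dvt[OF 2 dvt[OF dv_assoc 3]]])
qed

lemma le_refl: "le m m" unfolding le_def by (rule dvs[OF dv_idem])

lemma le_plus: assumes "le m1 n" "le m2 n" shows "le (Plus m1 m2) n"
proof -
  have 1: "dv n (Plus n m1)" "dv n (Plus n m2)" using assms le_def by auto
  have 2: "dv (Plus n m1) (Plus (Plus n m2) m1)"
    using derivable.plus[OF 1(2) dvr] .
  have 3: "dv (Plus (Plus n m2) m1) (Plus n (Plus m2 m1))"
    by (rule dvs[OF dv_assoc])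
  have 4: "dv (Plus n (Plus m2 m1)) (Plus n (Plus m1 m2))"
    using derivable.plus[OF dvr dv_comm] .
  show ?thesis unfolding le_def by (rule dvt[OF 1(1) dvt[OF 2 dvt[OF 3 4]]])
qed

lemma le_plusL: "le m (Plus m k)"
proof -
  have 1: "dv (Plus m k) (Plus (Plus m m) k)"
    using derivable.plus[OF dvs[OF dv_idem] dvr] .
  have 2: "dv (Plus (Plus m m) k) (Plus m (Plus m k))" by (rule dvs[OF dv_assoc])
  show ?thesis unfolding le_def by (rule dvt[OF 1 dvt[OF 2 dv_comm]])
qed

lemma le_cong1: "dv m m' \<Longrightarrow> le m n \<Longrightarrow> le m' n"
  unfolding le_def by (rule dvt, assumption, rule derivable.plus[OF dvr])

lemma le_cong2: "dv n n' \<Longrightarrow> le m n \<Longrightarrow> le m n'"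
  unfolding le_def by (rule dvt[OF dvs], assumption, rule dvt, assumption, rule derivable.plus[OF _ dvr])

lemma le_plusR: "le k (Plus m k)"
  using le_cong2[OF dv_comm le_plusL] .

lemma le_end: "le (V End) n" unfolding le_def by (rule dvs[OF dv_end])

lemma le_pre: assumes "le m n" shows "le (Pre a m) (Pre a n)"
proof -
  have "dv (Pre a n) (Pre a (Plus n m))" using derivable.pre[OF assms[unfolded le_def]] .
  then show ?thesis unfolding le_def by (rule dvt[OF _ dv_D])
qed

lemma le_foldr: "le m n \<Longrightarrow> le (foldr Pre s m) (foldr Pre s n)"
  by (induction s) (auto intro: le_pre)

fun paths :: "'a mon \<Rightarrow> ('a list \<times> 'a mon) set" where
  "paths (V v) = (if v = End then {} else {([], V v)})"
| "paths (Pre a m) = (\<lambda>(s,l). (a#s, l)) ` paths m"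
| "paths (Plus m n) = paths m \<union> paths n"
| "paths (Var x) = {([], Var x)}"

lemma path_le: "(s,l) \<in> paths m \<Longrightarrow> le (foldr Pre s l) m"
proof (induction m arbitrary: s)
  case (V v) then show ?case by (auto split: if_splits intro: le_refl)
next
  case (Pre a m) then show ?case by (auto intro!: le_pre)
next
  case (Plus m1 m2) then show ?case by (auto intro: le_trans[OF _ le_plusL] le_trans[OF _ le_plusR])
next
  case (Var x) then show ?case by (auto intro: le_refl)
qed

lemma foldr_end: "dv (foldr Pre t (V End)) (V End)"
proof (induction t)
  case Nil then show ?case by (simp add: dvr)
next
  case (Cons a t)
  have "dv (Pre a (foldr Pre t (V End))) (Pre a (V End))" using derivable.pre[OF Cons] .
  then show ?case using dvt[OF derivable.pre[OF Cons] derivable.ax[of axiom, OF axiom.E]] by simp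
qed

lemma foldr_plus: "dv (foldr Pre t (Plus m1 m2)) (Plus (foldr Pre t m1) (foldr Pre t m2))"
proof (induction t)
  case Nil then show ?case by (simp add: dvr)
next
  case (Cons a t)
  show ?case using dvt[OF derivable.pre[OF Cons] dv_D] by simp
qed

lemma le_paths: "\<forall>p\<in>paths m. le (foldr Pre (t @ fst p) (snd p)) n \<Longrightarrow> le (foldr Pre t m) n"
proof (induction m arbitrary: t)
  case (V v) then show ?case
    by (cases "v = End") (auto intro: le_cong1[OF dvs[OF foldr_end]] le_end)
next
  case (Pre a m)
  have "le (foldr Pre (t @ [a]) m) n"
    by (rule Pre.IH) (use Pre.prems in auto)
  then show ?case by simp
next
  case (Plus m1 m2)
  have "le (foldr Pre t m1) n" "le (foldr Pre t m2) n"
    by (rule Plus.IH; use Plus.prems in auto)+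
  then show ?case by (rule le_cong1[OF dvs[OF foldr_plus] le_plus])
next
  case (Var x) then show ?case by auto
qed

lemma le_pathsI: "(\<And>s l. (s,l) \<in> paths m \<Longrightarrow> le (foldr Pre s l) n) \<Longrightarrow> le m n"
  using le_paths[of m "[]" n] by auto

lemma verdict_abs: assumes "v = Yes \<or> v = No" shows "le (foldr Pre t (V v)) (V v)"
proof (induction t)
  case Nil then show ?case by (simp add: le_refl)
next
  case (Cons a t)
  have "le (Pre a (V v)) (V v)" unfolding le_def
    using assms derivable.ax[of axiom, OF axiom.Y[of a]] derivable.ax[of axiom, OF axiom.N[of a]] by auto
  then show ?case using le_trans[OF le_pre[OF Cons]] by simp
qed

lemma prefix_abs: assumes "v = Yes \<or> v = No" "prefix s' s"
  shows "le (foldr Pre s (V v)) (foldr Pre s' (V v))"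
proof -
  obtain t where "s = s' @ t" using assms(2) prefixE by blast
  then show ?thesis using le_foldr[OF verdict_abs[OF assms(1), of t], of s'] by simp
qed

lemma yesno_abs: assumes "l = V Yes \<or> l = V No \<or> (\<exists>x. l = Var x)"
  shows "le (foldr Pre t l) (Plus (V Yes) (V No))"
proof (induction t)
  case Nil then show ?case using assms
    by (auto intro: le_plusL le_plusR simp: le_def dv_O1)
next
  case (Cons a t)
  have "le (Pre a (V Yes)) (V Yes)" "le (Pre a (V No)) (V No)" unfolding le_def
    using derivable.ax[of axiom, OF axiom.Y[of a]] derivable.ax[of axiom, OF axiom.N[of a]] by auto
  then have "le (Plus (Pre a (V Yes)) (Pre a (V No))) (Plus (V Yes) (V No))"
    by (rule le_plus[OF le_trans[OF _ le_plusL] le_trans[OF _ le_plusR]])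
  then have "le (Pre a (Plus (V Yes) (V No))) (Plus (V Yes) (V No))"
    by (rule le_cong1[OF dvs[OF dv_D]])
  then show ?case using le_trans[OF le_pre[OF Cons]] by simp
qed

lemma var_abs:
  assumes "prefix s1 s" "prefix s2 s" "le (foldr Pre s1 (V Yes)) n" "le (foldr Pre s2 (V No)) n"
  shows "le (foldr Pre s (Var x)) n"
proof -
  obtain s' where s': "prefix s1 s'" "prefix s2 s'" "prefix s' s"
    using prefix_same_cases[OF assms(1,2)] assms(1,2) by blast
  have y: "le (foldr Pre s' (V Yes)) n" using le_trans[OF prefix_abs[OF _ s'(1)] assms(3)] by simp
  have n: "le (foldr Pre s' (V No)) n" using le_trans[OF prefix_abs[OF _ s'(2)] assms(4)] by simp
  have yn: "le (foldr Pre s' (Plus (V Yes) (V No))) n"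
    using le_cong1[OF dvs[OF foldr_plus] le_plus[OF y n]] .
  obtain t where "s = s' @ t" using s'(3) prefixE by blast
  then show ?thesis using le_trans[OF le_foldr[OF yesno_abs] yn, of "Var x" t] by simp
qed

fun tops :: "'a mon \<Rightarrow> 'a mon set" where
  "tops (Plus m n) = tops m \<union> tops n"
| "tops m = {m}"

lemma step_char: "step m \<alpha> m' \<longleftrightarrow> (\<exists>v. V v \<in> tops m \<and> m' = V v) \<or> (\<exists>a. \<alpha> = Some a \<and> Pre a m' \<in> tops m)"
proof
  assume "step m \<alpha> m'" then show "(\<exists>v. V v \<in> tops m \<and> m' = V v) \<or> (\<exists>a. \<alpha> = Some a \<and> Pre a m' \<in> tops m)"
    by induction auto
next
  assume "(\<exists>v. V v \<in> tops m \<and> m' = V v) \<or> (\<exists>a. \<alpha> = Some a \<and> Pre a m' \<in> tops m)"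
  then show "step m \<alpha> m'"
    by (induction m) (auto intro: step.intros)
qed

lemma tau_char: "tau_star m m' \<longleftrightarrow> m' = m \<or> (\<exists>v. V v \<in> tops m \<and> m' = V v)"
proof
  assume "tau_star m m'" then show "m' = m \<or> (\<exists>v. V v \<in> tops m \<and> m' = V v)"
    unfolding tau_star_def
  proof induction
    case base then show ?case by simp
  next
    case (step y z) then show ?case by (auto simp: step_char)
  qed
next
  assume "m' = m \<or> (\<exists>v. V v \<in> tops m \<and> m' = V v)"
  then show "tau_star m m'" unfolding tau_star_def
    by (auto intro: r_into_rtranclp simp: step_char)
qed

lemma weak_V: "weak (V v) u m' \<longleftrightarrow> m' = V v"
  by (induction u) (auto simp: tau_char step_char)

lemma paths_nil: "v \<noteq> End \<Longrightarrow> ([], V v) \<in> paths m \<longleftrightarrow> V v \<in> tops m"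
  by (induction m) auto

lemma paths_cons: "(a#s, l) \<in> paths m \<longleftrightarrow> (\<exists>m'. Pre a m' \<in> tops m \<and> (s,l) \<in> paths m')"
  by (induction m) auto

lemma weak_char: "v \<noteq> End \<Longrightarrow> weak m u (V v) \<longleftrightarrow> (\<exists>s. prefix s u \<and> (s, V v) \<in> paths m)"
proof (induction u arbitrary: m)
  case Nil
  have "tau_star m (V v) \<longleftrightarrow> V v \<in> tops m" using tau_char[of m "V v"] by (cases m) auto
  then show ?case by (simp add: paths_nil[OF Nil])
next
  case (Cons a u)
  note IH = Cons.IH and pr = Cons.prems
  have vv: "weak (V w) u (V v) \<longleftrightarrow> w = v" for w by (simp add: weak_V) blast
  show ?case
  proof
    assume "weak m (a # u) (V v)"
    then obtain m1 m2 m3 where w: "tau_star m m1" "step m1 (Some a) m2" "tau_star m2 m3" "weak m3 u (V v)"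
      by auto
    have nil: "\<exists>s. prefix s (a # u) \<and> (s, V v) \<in> paths m" if "V v \<in> tops m"
    proof -
      have "([], V v) \<in> paths m" using that paths_nil[OF pr] by blast
      then show ?thesis by (intro exI[of _ "[]"]) simp
    qed
    show "\<exists>s. prefix s (a # u) \<and> (s, V v) \<in> paths m"
    proof (cases "m1 = m")
      case False
      then obtain w' where w1: "V w' \<in> tops m" "m1 = V w'" using w(1) False unfolding tau_char by blast
      then have "m2 = V w'" using w(2) step_char[of "V w'"] by auto
      then have "m3 = V w'" using w(3) tau_char[of "V w'"] by auto
      then have "w' = v" using w(4) vv by simp
      then show ?thesis using nil w1 by simp
    next
      case True
      then have "(\<exists>w'. V w' \<in> tops m \<and> m2 = V w') \<or> Pre a m2 \<in> tops m"
        using w(2) step_char[of m "Some a" m2] by simp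
      then show ?thesis
      proof
        assume "\<exists>w'. V w' \<in> tops m \<and> m2 = V w'"
        then obtain w' where a: "V w' \<in> tops m" "m2 = V w'" by blast
        then have "m3 = V w'" using w(3) tau_char[of "V w'"] by auto
        then have "w' = v" using w(4) vv by simp
        then show ?thesis using nil a by simp
      next
        assume b: "Pre a m2 \<in> tops m"
        show ?thesis
        proof (cases "m3 = m2")
          case True
          then obtain s where s: "prefix s u" "(s, V v) \<in> paths m2" using IH pr w(4) by blast
          have "(a#s, V v) \<in> paths m" unfolding paths_cons using b s(2) by blast
          then show ?thesis using s(1) by (intro exI[of _ "a#s"]) simp
        next
          case False
          then obtain w' where c: "V w' \<in> tops m2" "m3 = V w'" using w(3) False unfolding tau_char by blast
          then have "w' = v" using w(4) vv by simp
          then have "([], V v) \<in> paths m2" using c paths_nil[OF pr] by blast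
          then have "([a], V v) \<in> paths m" unfolding paths_cons using b by blast
          then show ?thesis by (intro exI[of _ "[a]"]) simp
        qed
      qed
    qed
  next
    assume "\<exists>s. prefix s (a # u) \<and> (s, V v) \<in> paths m"
    then obtain s where s: "prefix s (a # u)" "(s, V v) \<in> paths m" by blast
    show "weak m (a # u) (V v)"
    proof (cases s)
      case Nil
      then have "([], V v) \<in> paths m" using s by simp
      then have "V v \<in> tops m" using paths_nil[OF pr] by blast
      then have "tau_star m (V v)" unfolding tau_char by blast
      moreover have "step (V v) (Some a) (V v)" by (rule step.verd)
      moreover have "tau_star (V v) (V v)" unfolding tau_char by blast
      moreover have "weak (V v) u (V v)" using vv by simp
      ultimately show ?thesis unfolding weak.simps by blast
    next
      case (Cons b s')
      then have "b = a" "prefix s' u" using s by auto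
      then have "(a#s', V v) \<in> paths m" using s Cons by simp
      then obtain m' where m': "Pre a m' \<in> tops m" "(s', V v) \<in> paths m'" unfolding paths_cons by blast
      have "tau_star m m" unfolding tau_char by blast
      moreover have "step m (Some a) m'" unfolding step_char using m'(1) by blast
      moreover have "tau_star m' m'" unfolding tau_char by blast
      moreover have "weak m' u (V v)" using IH \<open>prefix s' u\<close> pr m'(2) by blast
      ultimately show ?thesis unfolding weak.simps by blast
    qed
  qed
qed

lemma paths_leaf: "(s,l) \<in> paths m \<Longrightarrow> l = V Yes \<or> l = V No \<or> (\<exists>x. l = Var x)"
proof (induction m arbitrary: s)
  case (V v) then show ?case by (cases v) auto
qed auto

lemma subst_A: "(s, V v) \<in> paths m \<Longrightarrow> (s, V v) \<in> paths (subst \<sigma> m)"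
  by (induction m arbitrary: s) auto

lemma subst_B: "(s, Var x) \<in> paths m \<Longrightarrow> (t,l) \<in> paths (\<sigma> x) \<Longrightarrow> (s@t, l) \<in> paths (subst \<sigma> m)"
proof (induction m arbitrary: s)
  case (Pre a m)
  then obtain s' where s': "s = a#s'" "(s', Var x) \<in> paths m" by auto
  then have "(s'@t, l) \<in> paths (subst \<sigma> m)" using Pre by blast
  then show ?case using s'(1) by (simp add: image_iff) (rule bexI[of _ "(s'@t,l)"], auto)
qed (auto split: if_splits)

lemma subst_C: "(u, V v) \<in> paths (subst \<sigma> m) \<Longrightarrow>
   (u, V v) \<in> paths m \<or> (\<exists>s t x. u = s@t \<and> (s, Var x) \<in> paths m \<and> (t, V v) \<in> paths (\<sigma> x))"
proof (induction m arbitrary: u)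
  case (Pre a m)
  then obtain u' where u': "u = a # u'" "(u', V v) \<in> paths (subst \<sigma> m)" by auto
  then have "(u', V v) \<in> paths m \<or> (\<exists>s t x. u' = s@t \<and> (s, Var x) \<in> paths m \<and> (t, V v) \<in> paths (\<sigma> x))"
    using Pre.IH by blast
  then show ?case
  proof
    assume "(u', V v) \<in> paths m" then show ?thesis using u' by (intro disjI1) (simp add: image_iff, rule bexI[of _ "(u',V v)"], auto)
  next
    assume "\<exists>s t x. u' = s@t \<and> (s, Var x) \<in> paths m \<and> (t, V v) \<in> paths (\<sigma> x)"
    then obtain s t x where "u' = s@t" "(s, Var x) \<in> paths m" "(t, V v) \<in> paths (\<sigma> x)" by blast
    then show ?thesis using u' by (intro disjI2 exI[of _ "a#s"] exI[of _ t] exI[of _ x]) (auto simp: image_iff intro!: bexI[of _ "(s, Var x)"])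
  qed
next
  case (Plus m1 m2)
  from Plus.prems have "(u, V v) \<in> paths (subst \<sigma> m1) \<or> (u, V v) \<in> paths (subst \<sigma> m2)" by simp
  then show ?case
  proof
    assume "(u, V v) \<in> paths (subst \<sigma> m1)"
    from Plus.IH(1)[OF this] show ?thesis by auto
  next
    assume "(u, V v) \<in> paths (subst \<sigma> m2)"
    from Plus.IH(2)[OF this] show ?thesis by auto
  qed
qed auto

fun acts :: "'a mon \<Rightarrow> 'a set" where
  "acts (Pre a m) = insert a (acts m)"
| "acts (Plus m n) = acts m \<union> acts n"
| "acts _ = {}"

lemma finite_acts: "finite (acts m)" by (induction m) auto

lemma paths_acts: "(s,l) \<in> paths m \<Longrightarrow> set s \<subseteq> acts m"
proof (induction m arbitrary: s)
  case (Pre a m) then show ?case by (auto dest!: Pre.IH)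
next
  case (Plus m1 m2) then show ?case by (auto dest!: Plus.IH)
qed (auto split: if_splits)

lemma ceq: "closed_equiv a b \<Longrightarrow> v = Yes \<or> v = No \<Longrightarrow> weak a u (V v) \<longleftrightarrow> weak b u (V v)"
  unfolding closed_equiv_def La_def Lr_def by (auto simp: set_eq_iff)

lemma verdict_case:
  assumes eq: "mon_equiv m n" and v: "v = Yes \<or> v = No" and p: "(s, V v) \<in> paths m"
  shows "le (foldr Pre s (V v)) n"
proof -
  define \<sigma> where "\<sigma> = (\<lambda>x::nat. V End :: 'a mon)"
  have cs: "closed_subst \<sigma>" unfolding \<sigma>_def closed_subst_def closed_def by simp
  have "weak (subst \<sigma> m) s (V v)" using weak_char[of v] v subst_A[OF p] by auto
  then have "weak (subst \<sigma> n) s (V v)" using ceq eq cs v unfolding mon_equiv_def by blast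
  then obtain s' where s': "prefix s' s" "(s', V v) \<in> paths (subst \<sigma> n)" using weak_char[of v] v by auto
  then have "(s', V v) \<in> paths n" using subst_C[OF s'(2)] by (auto simp: \<sigma>_def)
  then show ?thesis using le_trans[OF prefix_abs[OF v s'(1)] path_le] by blast
qed

lemma var_case1:
  assumes eq: "mon_equiv m n" and v: "v = Yes \<or> v = No" and p: "(s, Var x) \<in> paths m"
    and b: "b \<notin> set s" "b \<notin> acts n"
  shows "(s, Var x) \<in> paths n \<or> (\<exists>s'. prefix s' s \<and> (s', V v) \<in> paths n)"
proof -
  define \<sigma> where "\<sigma> = (\<lambda>y::nat. if y = x then Pre b (V v) else V End)"
  have cs: "closed_subst \<sigma>" unfolding \<sigma>_def closed_subst_def closed_def by simp
  have "(s@[b], V v) \<in> paths (subst \<sigma> m)" using subst_B[OF p, of "[b]" "V v" \<sigma>] v by (auto simp: \<sigma>_def)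
  then have "weak (subst \<sigma> m) (s@[b]) (V v)" using weak_char[of v] v by auto
  then have "weak (subst \<sigma> n) (s@[b]) (V v)" using ceq eq cs v unfolding mon_equiv_def by blast
  moreover have ve: "v \<noteq> End" using v by auto
  ultimately obtain s' where s': "prefix s' (s@[b])" "(s', V v) \<in> paths (subst \<sigma> n)" using weak_char[OF ve] by blast
  from subst_C[OF s'(2)] show ?thesis
  proof
    assume h: "(s', V v) \<in> paths n"
    then have "s' \<noteq> s@[b]" using paths_acts[OF h] b by auto
    then show ?thesis using s'(1) h by auto
  next
    assume "\<exists>s1 t y. s' = s1@t \<and> (s1, Var y) \<in> paths n \<and> (t, V v) \<in> paths (\<sigma> y)"
    then obtain s1 t y where h: "s' = s1@t" "(s1, Var y) \<in> paths n" "(t, V v) \<in> paths (\<sigma> y)" by blast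
    then have "y = x" "t = [b]" by (auto simp: \<sigma>_def split: if_splits)
    then have "s1 = s" using s'(1) h(1) b(1)
      by (auto dest: set_mono_prefix)
    then show ?thesis using h \<open>y = x\<close> by auto
  qed
qed

lemma le_one: assumes "infinite (UNIV :: 'a set)" "mon_equiv m (n :: 'a mon)" shows "le m n"
proof (rule le_pathsI)
  fix s l assume p: "(s, l) \<in> paths m"
  consider "l = V Yes" | "l = V No" | x where "l = Var x" using paths_leaf[OF p] by blast
  then show "le (foldr Pre s l) n"
  proof cases
    case 1 then show ?thesis using verdict_case[OF assms(2)] p by blast
  next
    case 2 then show ?thesis using verdict_case[OF assms(2)] p by blast
  next
    case 3
    obtain b where b: "b \<notin> set s \<union> acts n"
      using ex_new_if_finite[OF assms(1)] finite_acts by (metis finite_Un finite_set)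
    have y: "(s, Var x) \<in> paths n \<or> (\<exists>s'. prefix s' s \<and> (s', V Yes) \<in> paths n)"
      using var_case1[OF assms(2) _ p[unfolded 3]] b by blast
    have no: "(s, Var x) \<in> paths n \<or> (\<exists>s'. prefix s' s \<and> (s', V No) \<in> paths n)"
      using var_case1[OF assms(2) _ p[unfolded 3]] b by blast
    show ?thesis
    proof (cases "(s, Var x) \<in> paths n")
      case True then show ?thesis using path_le 3 by blast
    next
      case False
      then obtain s1 s2 where "prefix s1 s" "(s1, V Yes) \<in> paths n" "prefix s2 s" "(s2, V No) \<in> paths n"
        using y no by blast
      then show ?thesis using var_abs path_le 3 by blast
    qed
  qed
qed

theorem mainTheorem9:
  fixes m n :: "'a mon"
  assumes "infinite (UNIV :: 'a set)"
    and "mon_equiv m n"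
  shows "derivable axiom m n"
proof -
  have "mon_equiv n m" using assms(2) unfolding mon_equiv_def closed_equiv_def by auto
  then show ?thesis using le_antisym le_one assms by blast
qed

end
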